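(* Fix $\alpha\in(0,1)$ and let $t=\lfloor K^{1+\alpha}\rfloor$. Then \[ \lim_{K\to\infty}\mathbb{P}\left(D_t<6K^{2\alpha}\right)=1. \]
   Context: Incremental construction. Fix an integer $K\ge2$, $[n]=\{1,\dots,n\}$. A random $K\times K$ matrix $\Psi$ is filled with $1,\dots,K^2$, the integer $s$ placed at step $s$. After step $t$, $R_t$, $C_t$ are the numbers of nonempty rows and columns (nonempty rows are $1,\dots,R_t$, nonempty columns $1,\dots,C_t$), and $M_t$ is the submatrix with rows $[R_t]$, columns $[C_t]$; $R_0=C_0=0$. Step 1: $\Psi(1,1)=1$ ($R_1=C_1=1$). For $t=1,\dots,K^2-1$, step $t+1$: with conditional probability $\rho_{t+1}=\frac{(K-R_t)K}{K^2-t}$ a new row is created ($R_{t+1}=R_t+1$), and independently with probability $\frac{K-C_t}{K}$ also a new column ($C_{t+1}=C_t+1$, $\Psi(R_{t+1},C_{t+1})=t+1$), otherwise $C_{t+1}=C_t$ and $\Psi(R_{t+1},Z)=t+1$ with $Z$ uniform in $[C_t]$. With probability $1-\rho_{t+1}$, no new row is created ($R_{t+1}=R_t$) and a uniformly random empty cell $(X,Y)$ among rows $[R_t]$ is chosen, generated by rejection sampling: cells are drawn independently and uniformly among the $R_tK$ cells of rows $[R_t]$ until an empty one is drawn; let $U_{t+1}=1$ if the first draw is empty and $U_{t+1}=0$ otherwise (so its conditional probability of being $1$ is $1-\frac{t}{R_tK}$). If $Y>C_t$ then $C_{t+1}=C_t+1$ and $\Psi(X,C_{t+1})=t+1$; otherwise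 $C_{t+1}=C_t$ and $\Psi(X,Y)=t+1$. Define $D_t$ as the number of steps $s\le t$ at which no new row is created and $U_s=0$. *)

theory Defs
  imports "HOL-Probability.Probability"
begin

text \<open>State of the incremental construction after t steps:
  (Psi, R, C, D), where Psi :: nat \<times> nat \<Rightarrow> nat is the matrix (1-based indices,
  entry 0 = empty cell), R, C are the numbers of nonempty rows/columns and
  D is the counter D_t.\<close>

type_synonym state = "(nat \<times> nat \<Rightarrow> nat) \<times> nat \<times> nat \<times> nat"

definition Dcount :: "state \<Rightarrow> nat" where
  "Dcount s = snd (snd (snd s))"

text \<open>Step t+1, performed from the state after step t (t \<ge> 1).
  Rejection sampling: the first draw is uniform over the R*K cells of rows [R];
  if it is empty it is the chosen cell (U = 1); otherwise (U = 0) subsequent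
  draws produce a uniformly random empty cell.\<close>

definition step :: "nat \<Rightarrow> nat \<Rightarrow> state \<Rightarrow> state pmf" where
  "step K t s = (case s of (Psi, R, C, D) \<Rightarrow>
     bind_pmf (bernoulli_pmf (real ((K - R) * K) / real (K^2 - t))) (\<lambda>newrow.
       if newrow then
         bind_pmf (bernoulli_pmf (real (K - C) / real K)) (\<lambda>newcol.
           if newcol then return_pmf (Psi((R+1, C+1) := t+1), R+1, C+1, D)
           else bind_pmf (pmf_of_set {1..C}) (\<lambda>Z.
                  return_pmf (Psi((R+1, Z) := t+1), R+1, C, D)))
       else
         bind_pmf (pmf_of_set ({1..R} \<times> {1..K})) (\<lambda>first.
           bind_pmf (if Psi first = 0 then return_pmf first
                     else pmf_of_set {c \<in> {1..R} \<times> {1..K}. Psi c = 0}) (\<lambda>(X, Y).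
             let D' = (if Psi first = 0 then D else D + 1) in
             if Y > C then return_pmf (Psi((X, C+1) := t+1), R, C+1, D')
             else return_pmf (Psi((X, Y) := t+1), R, C, D')))))"

text \<open>Distribution of the state after t steps (meaningful for t \<le> K^2).\<close>

primrec process :: "nat \<Rightarrow> nat \<Rightarrow> state pmf" where
  "process K 0 = return_pmf (\<lambda>_. 0, 0, 0, 0)"
| "process K (Suc t) =
     (if t = 0 then return_pmf ((\<lambda>_. 0)((1,1) := 1), 1, 1, 0)
      else bind_pmf (process K t) (step K t))"

end

theory Submission
  imports Defs "HOL-Analysis.Harmonic_Numbers"
begin


lemma bern_clamp: "bernoulli_pmf p = bernoulli_pmf (min 1 (max 0 p))"
  apply (rule pmf_eqI)
  by (auto simp: bernoulli_pmf.rep_eq)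

lemma bind_allI: "(\<And>y. y \<in> set_pmf M \<Longrightarrow> \<forall>z\<in>set_pmf (N y). Q z) \<Longrightarrow> \<forall>z\<in>set_pmf (bind_pmf M N). Q z"
  by auto

lemma return_allI: "Q x \<Longrightarrow> \<forall>z\<in>set_pmf (return_pmf x). Q z" by simp

lemma step_set:
  assumes "s' \<in> set_pmf (step K t (Psi, R, C, D))"
  shows "(\<exists>x C' D'. s' = (Psi(x := Suc t), R, C', D')) \<or>
    (True \<in> set_pmf (bernoulli_pmf (real ((K - R) * K) / real (K^2 - t))) \<and> (\<exists>x C' D'. s' = (Psi(x := Suc t), Suc R, C', D')))"
  using assms unfolding step_def by (auto simp: Let_def split: if_splits)

definition good :: "nat \<Rightarrow> nat \<Rightarrow> state \<Rightarrow> bool" where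
  "good K t s = (case s of (Psi, R, C, D) \<Rightarrow>
     R \<le> K \<and> finite {c. Psi c \<noteq> 0} \<and> card {c. Psi c \<noteq> 0} \<le> t)"

lemma nz_upd:
  assumes "finite {c. Psi c \<noteq> 0}" "card {c. Psi c \<noteq> 0} \<le> t"
  shows "finite {c. (Psi(x := v)) c \<noteq> (0::nat)} \<and> card {c. (Psi(x := v)) c \<noteq> 0} \<le> Suc t"
proof -
  have sub: "{c. (Psi(x := v)) c \<noteq> 0} \<subseteq> insert x {c. Psi c \<noteq> 0}" by auto
  have f: "finite (insert x {c. Psi c \<noteq> 0})" using assms by simp
  have "card {c. (Psi(x := v)) c \<noteq> 0} \<le> card (insert x {c. Psi c \<noteq> 0})"
    by (rule card_mono[OF f sub])
  also have "\<dots> \<le> Suc t" using assms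
    by (metis card_insert_if le_SucI Suc_le_mono)
  finally show ?thesis using finite_subset[OF sub f] by simp
qed

lemma true_in_bern: "True \<in> set_pmf (bernoulli_pmf p) \<Longrightarrow> p > 0"
proof (rule ccontr)
  assume a: "True \<in> set_pmf (bernoulli_pmf p)" "\<not> p > 0"
  hence "bernoulli_pmf p = bernoulli_pmf 0" by (subst (1 2) bern_clamp) simp
  hence "pmf (bernoulli_pmf p) True = 0" by simp
  with a show False by (simp add: set_pmf_iff)
qed

lemma step_good:
  assumes "good K t s" "s' \<in> set_pmf (step K t s)"
  shows "good K (Suc t) s'"
proof -
  obtain Psi R C D where s: "s = (Psi, R, C, D)" by (cases s) auto
  have g: "R \<le> K" "finite {c. Psi c \<noteq> 0}" "card {c. Psi c \<noteq> 0} \<le> t"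
    using assms(1) by (auto simp: good_def s)
  note nz = nz_upd[OF g(2,3)]
  from step_set[OF assms(2)[unfolded s]] show ?thesis
  proof
    assume "\<exists>x C' D'. s' = (Psi(x := Suc t), R, C', D')"
    then show ?thesis using g nz by (auto simp: good_def)
  next
    assume h: "True \<in> set_pmf (bernoulli_pmf (real ((K - R) * K) / real (K^2 - t))) \<and> (\<exists>x C' D'. s' = (Psi(x := Suc t), Suc R, C', D'))"
    hence "real ((K - R) * K) / real (K^2 - t) > 0" using true_in_bern by blast
    hence "R < K" using g(1) by (cases "R = K") auto
    then show ?thesis using h g nz by (auto simp: good_def)
  qed
qed

lemma process_good:
  assumes "K \<ge> 1"
  shows "s \<in> set_pmf (process K t) \<Longrightarrow> good K t s"
proof (induction t arbitrary: s)
  case 0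
  then show ?case by (simp add: good_def)
next
  case (Suc t)
  show ?case
  proof (cases "t = 0")
    case True
    have "{c. ((\<lambda>_. 0)((1, 1) := 1)) c \<noteq> (0::nat)} = {(1,1)}" by auto
    then show ?thesis using Suc.prems True assms by (simp add: good_def)
  next
    case False
    then obtain s0 where "s0 \<in> set_pmf (process K t)" "s \<in> set_pmf (step K t s0)"
      using Suc.prems by auto
    then show ?thesis using Suc.IH step_good by blast
  qed
qed

lemma nn_const_D:
  assumes "\<forall>x\<in>set_pmf M. Dcount x = d"
  shows "(\<integral>\<^sup>+x. ennreal (2 ^ Dcount x) \<partial>measure_pmf M) = ennreal (2 ^ d)"
proof -
  have "(\<integral>\<^sup>+x. ennreal (2 ^ Dcount x) \<partial>measure_pmf M) = (\<integral>\<^sup>+x. ennreal (2 ^ d) \<partial>measure_pmf M)"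
    by (rule nn_integral_cong_AE) (use assms in \<open>auto intro!: AE_pmfI\<close>)
  then show ?thesis by (simp add: measure_pmf.emeasure_space_1)
qed



lemma step_exp:
  assumes g: "good K t (Psi, R, C, D)" and tK: "t < K^2"
  shows "(\<integral>\<^sup>+x. ennreal (2 ^ Dcount x) \<partial>measure_pmf (step K t (Psi, R, C, D)))
          \<le> ennreal (2 ^ D * (1 + real t / real (K^2 - t)))"
proof -
  have RK: "R \<le> K" and fin: "finite {c. Psi c \<noteq> 0}" and cd: "card {c. Psi c \<noteq> 0} \<le> t"
    using g by (auto simp: good_def)
  define \<rho> where "\<rho> = real ((K - R) * K) / real (K^2 - t)"
  define A where "A = bind_pmf (bernoulli_pmf (real (K - C) / real K)) (\<lambda>newcol.
           if newcol then return_pmf (Psi((R+1, C+1) := t+1), R+1, C+1, D)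
           else bind_pmf (pmf_of_set {1..C}) (\<lambda>Z.
                  return_pmf (Psi((R+1, Z) := t+1), R+1, C, D)))"
  define box where "box = {1..R} \<times> {1..K}"
  define Inner where "Inner = (\<lambda>first. bind_pmf (if Psi first = 0 then return_pmf first
                     else pmf_of_set {c \<in> box. Psi c = 0}) (\<lambda>(X, Y).
             let D' = (if Psi first = 0 then D else D + 1) in
             if Y > C then return_pmf (Psi((X, C+1) := t+1), R, C+1, D')
             else return_pmf (Psi((X, Y) := t+1), R, C, D')))"
  define B where "B = bind_pmf (pmf_of_set box) Inner"
  have st: "step K t (Psi, R, C, D) = bind_pmf (bernoulli_pmf \<rho>) (\<lambda>b. if b then A else B)"
    unfolding step_def \<rho>_def A_def B_def Inner_def box_def by simp
  define p where "p = min 1 (max 0 \<rho>)"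
  have p01: "0 \<le> p" "p \<le> 1" by (auto simp: p_def)
  define f where "f = (\<lambda>x::state. ennreal (2 ^ Dcount x))"
  have "(\<integral>\<^sup>+x. f x \<partial>measure_pmf (step K t (Psi, R, C, D)))
      = (\<integral>\<^sup>+b. (\<integral>\<^sup>+x. f x \<partial>measure_pmf (if b then A else B)) \<partial>measure_pmf (bernoulli_pmf p))"
    unfolding st p_def by (subst bern_clamp) simp
  also have "\<dots> = (\<integral>\<^sup>+x. f x \<partial>measure_pmf A) * p + (\<integral>\<^sup>+x. f x \<partial>measure_pmf B) * (1 - p)"
    using p01 by (subst nn_integral_bernoulli_pmf) auto
  also have "(\<integral>\<^sup>+x. f x \<partial>measure_pmf A) = ennreal (2 ^ D)"
    unfolding f_def by (rule nn_const_D) (auto simp: A_def Dcount_def)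
  finally have E: "(\<integral>\<^sup>+x. f x \<partial>measure_pmf (step K t (Psi, R, C, D)))
      = ennreal (2 ^ D) * p + (\<integral>\<^sup>+x. f x \<partial>measure_pmf B) * (1 - p)" .
  have t2: "real (K^2 - t) = real K ^ 2 - real t" using tK by (simp add: of_nat_diff)
  have kr: "real ((K - R) * K) = (real K - real R) * real K" using RK by (simp add: of_nat_diff)
  have pos: "real K ^ 2 - real t > 0" using tK
    by (metis of_nat_less_iff of_nat_power diff_gt_0_iff_gt)
  have q0: "0 \<le> real t / real (K^2 - t)" by simp
  show ?thesis
  proof (cases "R * K \<le> t")
    case True
    have "(real K - real R) * real K \<ge> real K ^ 2 - real t"
      using True by (simp add: algebra_simps power2_eq_square) (metis of_nat_le_iff of_nat_mult)
    hence "\<rho> \<ge> 1" unfolding \<rho>_def kr t2 using pos by simp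
    hence "p = 1" by (simp add: p_def)
    hence "(\<integral>\<^sup>+x. f x \<partial>measure_pmf (step K t (Psi, R, C, D))) = ennreal (2 ^ D)"
      using E by simp
    also have "\<dots> \<le> ennreal (2 ^ D * (1 + real t / real (K^2 - t)))"
      using q0 by (intro ennreal_leI) simp
    finally show ?thesis unfolding f_def .
  next
    case False
    hence RKt: "real R * real K > real t" by (metis not_le of_nat_less_iff of_nat_mult)
    hence R0: "R > 0" "K > 0" by (auto intro: Nat.gr0I)
    have rho0: "\<rho> \<ge> 0" unfolding \<rho>_def by simp
    have "(real K - real R) * real K \<le> real K ^ 2 - real t"
      using RKt by (simp add: algebra_simps power2_eq_square)
    hence "\<rho> \<le> 1" unfolding \<rho>_def kr t2 using pos by simp
    hence pr: "p = \<rho>" using rho0 by (simp add: p_def)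
    have boxne: "box \<noteq> {}" "finite box" using R0 by (auto simp: box_def)
    have cbox: "card box = R * K" by (simp add: box_def)
    let ?NZ = "{c. Psi c \<noteq> 0}"
    have inner: "\<forall>x\<in>set_pmf (Inner first). Dcount x = (if Psi first = 0 then D else Suc D)" for first
      by (cases first) (auto simp: Inner_def Dcount_def Let_def split: if_splits)
    have "(\<integral>\<^sup>+x. f x \<partial>measure_pmf B) = (\<integral>\<^sup>+first. (\<integral>\<^sup>+x. f x \<partial>measure_pmf (Inner first)) \<partial>measure_pmf (pmf_of_set box))"
      by (simp add: B_def)
    also have "\<dots> = (\<integral>\<^sup>+first. ennreal (2 ^ D) * (1 + indicator ?NZ first) \<partial>measure_pmf (pmf_of_set box))"
      unfolding f_def
      by (rule nn_integral_cong, subst nn_const_D[OF inner]) (auto simp: indicator_def ennreal_mult' mult.commute)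
    also have "\<dots> = ennreal (2 ^ D) * (1 + emeasure (measure_pmf (pmf_of_set box)) ?NZ)"
      by (simp add: nn_integral_cmult nn_integral_add measure_pmf.emeasure_space_1)
    also have "emeasure (measure_pmf (pmf_of_set box)) ?NZ = ennreal (real (card (box \<inter> ?NZ)) / real (card box))"
      using boxne by (simp add: measure_pmf.emeasure_eq_measure measure_pmf_of_set)
    finally have EB: "(\<integral>\<^sup>+x. f x \<partial>measure_pmf B) = ennreal (2 ^ D) * (1 + ennreal (real (card (box \<inter> ?NZ)) / real (card box)))" .
    have "card (box \<inter> ?NZ) \<le> card ?NZ" using fin by (intro card_mono) auto
    hence cnz: "real (card (box \<inter> ?NZ)) \<le> real t" using cd by linarith
    define m where "m = real (card (box \<inter> ?NZ)) / real (card box)"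
    have m0: "m \<ge> 0" by (simp add: m_def)
    have mle: "m \<le> real t / (real R * real K)" unfolding m_def cbox
      using cnz RKt by (simp add: divide_right_mono)
    have "(\<integral>\<^sup>+x. f x \<partial>measure_pmf (step K t (Psi, R, C, D)))
        = ennreal (2 ^ D * \<rho> + 2 ^ D * (1 + m) * (1 - \<rho>))"
    proof -
      have a1: "1 + ennreal m = ennreal (1 + m)" using m0 by (simp add: ennreal_plus)
      have a2: "ennreal (2 ^ D) * ennreal (1 + m) * ennreal (1 - \<rho>) = ennreal (2 ^ D * (1 + m) * (1 - \<rho>))"
        using m0 \<open>\<rho> \<le> 1\<close> by (simp add: ennreal_mult)
      have a3: "ennreal (2 ^ D) * ennreal \<rho> = ennreal (2 ^ D * \<rho>)" using rho0 by (simp add: ennreal_mult)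
      have a4: "ennreal (2 ^ D * \<rho>) + ennreal (2 ^ D * (1 + m) * (1 - \<rho>)) = ennreal (2 ^ D * \<rho> + 2 ^ D * (1 + m) * (1 - \<rho>))"
        using rho0 m0 \<open>\<rho> \<le> 1\<close> by (simp add: ennreal_plus)
      have a5: "(1 - ennreal \<rho>) = ennreal (1 - \<rho>)" using rho0 \<open>\<rho> \<le> 1\<close> by (metis ennreal_1 ennreal_minus)
      show ?thesis unfolding E EB pr m_def[symmetric] a1 a5 a2 a3 a4 ..
    qed
    also have "\<dots> \<le> ennreal (2 ^ D * (1 + real t / real (K^2 - t)))"
    proof (rule ennreal_leI)
      have om: "1 - \<rho> = (real R * real K - real t) / (real K ^ 2 - real t)"
        unfolding \<rho>_def kr t2 using pos by (simp add: field_simps power2_eq_square)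
      have "(1 - \<rho>) * m \<le> (1 - \<rho>) * (real t / (real R * real K))"
        using mle \<open>\<rho> \<le> 1\<close> by (intro mult_left_mono) auto
      also have "\<dots> = (real t / (real K ^ 2 - real t)) * ((real R * real K - real t) / (real R * real K))"
        unfolding om by (simp add: field_simps)
      also have "\<dots> \<le> (real t / (real K ^ 2 - real t)) * 1"
        using RKt pos by (intro mult_left_mono) auto
      finally have key: "(1 - \<rho>) * m \<le> real t / real (K^2 - t)" unfolding t2 by simp
      then show "2 ^ D * \<rho> + 2 ^ D * (1 + m) * (1 - \<rho>) \<le> 2 ^ D * (1 + real t / real (K^2 - t))"
      proof -
        have "2 ^ D * \<rho> + 2 ^ D * (1 + m) * (1 - \<rho>) = 2 ^ D * (1 + (1 - \<rho>) * m)"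
          by (simp add: algebra_simps)
        also have "\<dots> \<le> 2 ^ D * (1 + real t / real (K^2 - t))"
          using key by (intro mult_left_mono) auto
        finally show ?thesis .
      qed
    qed
    finally show ?thesis unfolding f_def .
  qed
qed



lemma process_exp:
  assumes K1: "K \<ge> 1" and TK: "T < K^2"
  shows "t \<le> T \<Longrightarrow> (\<integral>\<^sup>+x. ennreal (2 ^ Dcount x) \<partial>measure_pmf (process K t))
           \<le> ennreal ((1 + real T / real (K^2 - T)) ^ t)"
proof (induction t)
  case 0
  then show ?case by (simp add: Dcount_def)
next
  case (Suc t)
  define Q where "Q = real T / real (K^2 - T)"
  have Q0: "Q \<ge> 0" by (simp add: Q_def)
  show ?case
  proof (cases "t = 0")
    case True
    then show ?thesis using Q0 by (simp add: Dcount_def Q_def)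
  next
    case False
    have tT: "t \<le> T" using Suc.prems by simp
    have qle: "real t / real (K^2 - t) \<le> Q" unfolding Q_def
      using tT TK by (intro frac_le) auto
    have "(\<integral>\<^sup>+x. ennreal (2 ^ Dcount x) \<partial>measure_pmf (process K (Suc t)))
        = (\<integral>\<^sup>+s. (\<integral>\<^sup>+x. ennreal (2 ^ Dcount x) \<partial>measure_pmf (step K t s)) \<partial>measure_pmf (process K t))"
      using False by simp
    also have "\<dots> \<le> (\<integral>\<^sup>+s. ennreal (2 ^ Dcount s) * ennreal (1 + Q) \<partial>measure_pmf (process K t))"
    proof (rule nn_integral_mono_AE, rule AE_pmfI)
      fix s assume s: "s \<in> set_pmf (process K t)"
      obtain Psi R C D where sd: "s = (Psi, R, C, D)" by (cases s) auto
      have g: "good K t (Psi, R, C, D)" using process_good[OF K1 s] sd by simp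
      have "(\<integral>\<^sup>+x. ennreal (2 ^ Dcount x) \<partial>measure_pmf (step K t s))
          \<le> ennreal (2 ^ D * (1 + real t / real (K^2 - t)))"
        unfolding sd by (rule step_exp[OF g]) (use tT TK in simp)
      also have "\<dots> \<le> ennreal (2 ^ D * (1 + Q))"
        using qle by (intro ennreal_leI mult_left_mono) auto
      also have "\<dots> = ennreal (2 ^ Dcount s) * ennreal (1 + Q)"
        using Q0 by (simp add: sd Dcount_def ennreal_mult)
      finally show "(\<integral>\<^sup>+x. ennreal (2 ^ Dcount x) \<partial>measure_pmf (step K t s))
          \<le> ennreal (2 ^ Dcount s) * ennreal (1 + Q)" .
    qed
    also have "\<dots> = (\<integral>\<^sup>+s. ennreal (2 ^ Dcount s) \<partial>measure_pmf (process K t)) * ennreal (1 + Q)"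
      by (rule nn_integral_multc) simp
    also have "\<dots> \<le> ennreal ((1 + Q) ^ t) * ennreal (1 + Q)"
      using Suc.IH tT unfolding Q_def by (intro mult_right_mono) auto
    also have "\<dots> = ennreal ((1 + Q) ^ Suc t)"
      using Q0 by (simp add: ennreal_mult'[symmetric] mult.commute del: ennreal_plus)
    finally show ?thesis unfolding Q_def .
  qed
qed

lemma markov_D:
  assumes K1: "K \<ge> 1" and TK: "T < K^2"
  shows "measure_pmf.prob (process K T) {s. a \<le> real (Dcount s)}
          \<le> (1 + real T / real (K^2 - T)) ^ T / 2 powr a"
proof -
  let ?M = "measure_pmf (process K T)"
  define c where "c = 1 / 2 powr a"
  have c0: "c > 0" by (simp add: c_def)
  have "emeasure ?M {s. a \<le> real (Dcount s)} = (\<integral>\<^sup>+s. indicator {s. a \<le> real (Dcount s)} s \<partial>?M)"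
    by simp
  also have "\<dots> \<le> (\<integral>\<^sup>+s. ennreal (2 ^ Dcount s) * ennreal c \<partial>?M)"
  proof (rule nn_integral_mono)
    fix s
    show "indicator {s. a \<le> real (Dcount s)} s \<le> ennreal (2 ^ Dcount s) * ennreal c"
    proof (cases "a \<le> real (Dcount s)")
      case True
      have "2 powr a \<le> 2 powr real (Dcount s)" using True by simp
      also have "\<dots> = 2 ^ Dcount s" by (simp add: powr_realpow)
      finally have "1 \<le> 2 ^ Dcount s * c" unfolding c_def by (simp add: field_simps)
      then show ?thesis using True c0 by (simp add: ennreal_mult[symmetric] ennreal_1[symmetric] del: ennreal_1)
    qed simp
  qed
  also have "\<dots> = (\<integral>\<^sup>+s. ennreal (2 ^ Dcount s) \<partial>?M) * ennreal c"
    by (rule nn_integral_multc) simp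
  also have "\<dots> \<le> ennreal ((1 + real T / real (K^2 - T)) ^ T) * ennreal c"
    by (intro mult_right_mono process_exp[OF K1 TK]) auto
  also have "\<dots> = ennreal ((1 + real T / real (K^2 - T)) ^ T / 2 powr a)"
    using c0 by (simp add: ennreal_mult[symmetric] c_def)
  finally have E: "ennreal (measure_pmf.prob (process K T) {s. a \<le> real (Dcount s)})
      \<le> ennreal ((1 + real T / real (K^2 - T)) ^ T / 2 powr a)"
    by (simp add: measure_pmf.emeasure_eq_measure)
  have X0: "0 \<le> (1 + real T / real (K^2 - T)) ^ T / 2 powr a" by simp
  show ?thesis using E X0 by (simp add: ennreal_le_iff)
qed



lemma real_powr_at_top':
  assumes "(p::real) > 0"
  shows   "filterlim (\<lambda>x. x powr p) at_top at_top"
proof (subst filterlim_cong[OF refl refl])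
  show "LIM x at_top. exp (p * ln x) :> at_top"
    by (rule filterlim_compose[OF exp_at_top filterlim_tendsto_pos_mult_at_top[OF tendsto_const]])
       (simp_all add: ln_at_top assms)
  show "eventually (\<lambda>x. x powr p = exp (p * ln x)) at_top"
    using eventually_gt_at_top[of 0] by eventually_elim (simp add: powr_def)
qed

lemma seq_powr_at_top:
  assumes "(p::real) > 0"
  shows "filterlim (\<lambda>K::nat. real K powr p) at_top sequentially"
  by (rule filterlim_compose[OF real_powr_at_top'[OF assms] filterlim_real_sequentially])

lemma bound_fixed_K:
  fixes \<alpha> :: real and K :: nat
  assumes a0: "0 < \<alpha>" and a1: "\<alpha> < 1" and K1: "K \<ge> 1" and big: "2 \<le> real K powr (1 - \<alpha>)"
  shows "1 - exp (- (real K powr (2 * \<alpha>))) \<le> measure_pmf.prob (process K (nat \<lfloor>real K powr (1 + \<alpha>)\<rfloor>))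
            {s. real (Dcount s) < 6 * real K powr (2 * \<alpha>)}"
proof -
  define n where "n = real K"
  define T where "T = nat \<lfloor>n powr (1 + \<alpha>)\<rfloor>"
  define x where "x = n powr (2 * \<alpha>)"
  define a where "a = 6 * x"
  have n1: "n \<ge> 1" using K1 by (simp add: n_def)
  have x0: "x \<ge> 0" by (simp add: x_def)
  have n2: "n^2 = n powr (1 - \<alpha>) * n powr (1 + \<alpha>)"
  proof -
    have "n powr (1 - \<alpha>) * n powr (1 + \<alpha>) = n powr ((1 - \<alpha>) + (1 + \<alpha>))" by (simp only: powr_add)
    also have "(1 - \<alpha>) + (1 + \<alpha>) = (2::real)" by simp
    finally show ?thesis using n1 by (simp add: powr_numeral)
  qed
  have y0: "n powr (1 + \<alpha>) \<ge> 0" by simp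
  have half: "2 * n powr (1 + \<alpha>) \<le> n^2"
    unfolding n2 using big y0 by (intro mult_right_mono) (auto simp: n_def)
  have Ty: "real T \<le> n powr (1 + \<alpha>)" unfolding T_def using y0 by linarith
  have T0: "real T \<ge> 0" by simp
  have npos: "n^2 > 0" using n1 by simp
  have TK: "T < K^2"
  proof -
    have "real T < n^2" using Ty half npos by linarith
    thus ?thesis by (simp add: n_def)
  qed
  have den: "real (K^2 - T) = n^2 - real T" using TK by (simp add: of_nat_diff n_def)
  have den2: "n^2 - real T \<ge> n^2 / 2" using Ty half by linarith
  define Q where "Q = real T / real (K^2 - T)"
  have Q0: "Q \<ge> 0" by (simp add: Q_def)
  have npos1: "n > 0" using n1 by simp
  have p2: "n powr 2 = n^2" using npos1 by (simp add: powr_numeral)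
  have sq: "(n powr (1 + \<alpha>))^2 = n^2 * x"
  proof -
    have "(n powr (1 + \<alpha>))^2 = n powr (1 + \<alpha>) * n powr (1 + \<alpha>)" by (simp add: power2_eq_square)
    also have "\<dots> = n powr ((1 + \<alpha>) + (1 + \<alpha>))" by (simp only: powr_add)
    also have "(1 + \<alpha>) + (1 + \<alpha>) = 2 + 2 * \<alpha>" by simp
    also have "n powr (2 + 2 * \<alpha>) = n powr 2 * n powr (2 * \<alpha>)" by (simp only: powr_add)
    finally show ?thesis by (simp only: p2 x_def)
  qed
  have QT: "Q * real T \<le> 2 * x"
  proof -
    have "Q * real T = (real T)^2 / (n^2 - real T)" unfolding Q_def den by (simp add: power2_eq_square)
    also have "\<dots> \<le> (n^2 * x) / (n^2 / 2)"
    proof (rule frac_le)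
      show "(real T)^2 \<le> n^2 * x" unfolding sq[symmetric] using Ty T0 by (intro power_mono) auto
    qed (use x0 npos den2 in auto)
    also have "\<dots> = 2 * x" using npos by (simp add: field_simps)
    finally show ?thesis .
  qed
  have "(1 + Q) ^ T \<le> exp Q ^ T"
    using Q0 by (intro power_mono) (auto simp: add.commute exp_ge_add_one_self)
  also have "\<dots> = exp (Q * real T)" by (simp add: exp_of_nat_mult[symmetric] mult.commute)
  also have "\<dots> \<le> exp (2 * x)" using QT by simp
  finally have pw: "(1 + Q) ^ T \<le> exp (2 * x)" .
  have "4 * x \<le> a * ln 2"
  proof -
    have "(6 * x) * (2/3) \<le> (6 * x) * ln 2" using ln2_ge_two_thirds x0 by (intro mult_left_mono) auto
    thus ?thesis by (simp add: a_def)
  qed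
  hence pa: "exp (4 * x) \<le> 2 powr a" by (simp add: powr_def mult.commute)
  have "measure_pmf.prob (process K T) {s. a \<le> real (Dcount s)} \<le> (1 + Q) ^ T / 2 powr a"
    unfolding Q_def by (rule markov_D[OF K1 TK])
  also have "\<dots> \<le> exp (2 * x) / exp (4 * x)"
    using pw pa by (intro frac_le) auto
  also have "\<dots> = exp (- (2 * x))" by (simp add: exp_diff[symmetric])
  also have "\<dots> \<le> exp (- x)" using x0 by simp
  finally have P: "measure_pmf.prob (process K T) {s. a \<le> real (Dcount s)} \<le> exp (- x)" .
  have "{s. real (Dcount s) < a} = space (measure_pmf (process K T)) - {s. a \<le> real (Dcount s)}"
    by auto
  hence "measure_pmf.prob (process K T) {s. real (Dcount s) < a} = 1 - measure_pmf.prob (process K T) {s. a \<le> real (Dcount s)}"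
    using measure_pmf.prob_compl[of "{s. a \<le> real (Dcount s)}" "process K T"] by simp
  with P show ?thesis by (simp add: a_def x_def T_def n_def)
qed

theorem lemma6p3:
  fixes \<alpha> :: real
  assumes "0 < \<alpha>" and "\<alpha> < 1"
  shows "((\<lambda>K::nat. measure_pmf.prob (process K (nat \<lfloor>real K powr (1 + \<alpha>)\<rfloor>))
            {s. real (Dcount s) < 6 * real K powr (2 * \<alpha>)}) \<longlongrightarrow> 1) sequentially"
proof (rule tendsto_sandwich[where f = "\<lambda>K. 1 - exp (- (real K powr (2 * \<alpha>)))" and h = "\<lambda>_. 1"])
  have e1: "eventually (\<lambda>K::nat. 2 \<le> real K powr (1 - \<alpha>)) sequentially"
    using seq_powr_at_top[of "1 - \<alpha>"] assms by (simp add: filterlim_at_top)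
  have e2: "eventually (\<lambda>K::nat. K \<ge> 1) sequentially" by (rule eventually_ge_at_top)
  show "eventually (\<lambda>K. 1 - exp (- (real K powr (2 * \<alpha>))) \<le> measure_pmf.prob (process K (nat \<lfloor>real K powr (1 + \<alpha>)\<rfloor>))
            {s. real (Dcount s) < 6 * real K powr (2 * \<alpha>)}) sequentially"
    using e1 e2 by eventually_elim (rule bound_fixed_K[OF assms])
  show "eventually (\<lambda>K. measure_pmf.prob (process K (nat \<lfloor>real K powr (1 + \<alpha>)\<rfloor>))
            {s. real (Dcount s) < 6 * real K powr (2 * \<alpha>)} \<le> 1) sequentially"
    by simp
  show "((\<lambda>_. 1::real) \<longlongrightarrow> 1) sequentially" by simp
  have "((\<lambda>K::nat. exp (- (real K powr (2 * \<alpha>)))) \<longlongrightarrow> 0) sequentially"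
  proof -
    have "filterlim (\<lambda>K::nat. - (real K powr (2 * \<alpha>))) at_bot sequentially"
      using seq_powr_at_top[of "2 * \<alpha>"] assms by (simp add: filterlim_uminus_at_top)
    thus ?thesis by (rule filterlim_compose[OF exp_at_bot])
  qed
  hence "((\<lambda>K::nat. 1 - exp (- (real K powr (2 * \<alpha>)))) \<longlongrightarrow> 1 - 0) sequentially"
    by (intro tendsto_diff tendsto_const)
  thus "((\<lambda>K::nat. 1 - exp (- (real K powr (2 * \<alpha>)))) \<longlongrightarrow> 1) sequentially" by simp
qed


end
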